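(* Let $\mathcal{C}(\mathbb{R}) = \{A\subseteq\mathbb{R} : A \text{ is countable or } \mathbb{R}\setminus A \text{ is countable}\}$. Then $\mathcal{C}(\mathbb{R}) \neq \mathcal{B}_f(\mathbb{R})$ for every two-point selection $f$ on $\mathbb{R}$.
   Context: A two-point selection on $\mathbb{R}$ is a function $f$ from the set of two-element subsets of $\mathbb{R}$ to $\mathbb{R}$ with $f(F)\in F$. Write $r<_f s$ if $f(\{r,s\})=r$ ($r\ne s$), $(\leftarrow,r)_f=\{x: x<_f r\}$, $(r,\rightarrow)_f=\{x: r<_f x\}$. The topology $\tau_f$ on $\mathbb{R}$ is generated (as a subbase) by all sets $(\leftarrow,r)_f$, $(r,\rightarrow)_f$, $r\in\mathbb{R}$, and $\mathcal{B}_f(\mathbb{R})$ is the $\sigma$-algebra generated by $\tau_f$. *)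

theory Defs
  imports "HOL-Analysis.Analysis"
begin

definition two_point_selection :: "(real set \<Rightarrow> real) \<Rightarrow> bool" where
  "two_point_selection f \<longleftrightarrow> (\<forall>x y. x \<noteq> y \<longrightarrow> f {x, y} \<in> {x, y})"

definition sel_less :: "(real set \<Rightarrow> real) \<Rightarrow> real \<Rightarrow> real \<Rightarrow> bool" where
  "sel_less f r s \<longleftrightarrow> r \<noteq> s \<and> f {r, s} = r"

definition sel_subbase :: "(real set \<Rightarrow> real) \<Rightarrow> real set set" where
  "sel_subbase f = {{x. sel_less f x r} | r. True} \<union> {{x. sel_less f r x} | r. True}"

definition sel_topology :: "(real set \<Rightarrow> real) \<Rightarrow> real topology" where
  "sel_topology f = topology_generated_by (sel_subbase f)"

definition sel_borel :: "(real set \<Rightarrow> real) \<Rightarrow> real set set" where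
  "sel_borel f = sigma_sets UNIV {U. openin (sel_topology f) U}"

definition countable_cocountable :: "real set set" where
  "countable_cocountable = {A. countable A \<or> countable (UNIV - A)}"

end

theory Submission
  imports Defs
begin

unbundle cardinal_syntax

lemma split_uncountable:
  fixes P :: "'a set"
  assumes "uncountable P"
  shows "\<exists>P1 P2. P1 \<subseteq> P \<and> P2 \<subseteq> P \<and> P1 \<inter> P2 = {} \<and> uncountable P1 \<and> uncountable P2"
proof -
  have inf: "infinite P" using assms countable_finite by blast
  have "|P \<times> P| \<le>o |P|"
    using card_of_Times_same_infinite[OF inf] by (rule ordIso_imp_ordLeq)
  then obtain g where g: "inj_on g (P \<times> P)" "g ` (P \<times> P) \<subseteq> P"
    using card_of_ordLeq[of "P \<times> P" P] by auto
  have "P \<noteq> {}" using inf by (rule infinite_imp_nonempty)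
  then obtain a where a: "a \<in> P" by blast
  have "infinite (P - {a})" using inf by simp
  then have "P - {a} \<noteq> {}" by (rule infinite_imp_nonempty)
  then obtain b where b: "b \<in> P - {a}" by blast
  have ab: "a \<in> P" "b \<in> P" "a \<noteq> b" using a b by auto
  let ?P1 = "g ` (P \<times> {a})" and ?P2 = "g ` (P \<times> {b})"
  have i1: "inj_on g (P \<times> {a})" using g(1) ab by (auto intro: inj_on_subset)
  have i2: "inj_on g (P \<times> {b})" using g(1) ab by (auto intro: inj_on_subset)
  have u1: "uncountable (P \<times> {a})"
  proof
    assume "countable (P \<times> {a})"
    then have "countable (fst ` (P \<times> {a}))" by (rule countable_image)
    moreover have "fst ` (P \<times> {a}) = P" by simp
    ultimately show False using assms by simp
  qed
  have u2: "uncountable (P \<times> {b})"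
  proof
    assume "countable (P \<times> {b})"
    then have "countable (fst ` (P \<times> {b}))" by (rule countable_image)
    moreover have "fst ` (P \<times> {b}) = P" by simp
    ultimately show False using assms by simp
  qed
  have "uncountable ?P1" using u1 i1 countable_image_inj_on by blast
  moreover have "uncountable ?P2" using u2 i2 countable_image_inj_on by blast
  moreover have "?P1 \<inter> ?P2 = {}"
  proof (rule ccontr)
    assume "?P1 \<inter> ?P2 \<noteq> {}"
    then obtain x y where "x \<in> P" "y \<in> P" "g (x, a) = g (y, b)" by auto
    moreover have "(x, a) \<in> P \<times> P" "(y, b) \<in> P \<times> P" using ab \<open>x \<in> P\<close> \<open>y \<in> P\<close> by auto
    ultimately have "(x, a) = (y, b)" using g(1) by (simp add: inj_on_eq_iff)
    then show False using ab by simp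
  qed
  moreover have "?P1 \<subseteq> P" "?P2 \<subseteq> P" using g ab by auto
  ultimately show ?thesis by blast
qed


lemma lemma_M:
  fixes lt :: "real \<Rightarrow> real \<Rightarrow> bool" and Op :: "real set \<Rightarrow> bool"
  assumes tot: "\<And>x y. x \<noteq> y \<Longrightarrow> lt x y \<or> lt y x"
    and asy: "\<And>x y. lt x y \<Longrightarrow> \<not> lt y x"
    and Oin: "\<And>r. Op {x. lt x r}" and Oout: "\<And>r. Op {x. lt r x}"
    and OInt: "\<And>U V. Op U \<Longrightarrow> Op V \<Longrightarrow> Op (U \<inter> V)"
    and OUn: "\<And>\<U>. (\<forall>U\<in>\<U>. Op U) \<Longrightarrow> Op (\<Union>\<U>)"
    and cc: "\<And>U. Op U \<Longrightarrow> countable U \<or> countable (- U)"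
    and Aunc: "uncountable {r. countable {x. lt x r}}"
  shows False
proof -
  define A where "A = {r. countable {x. lt x r}}"
  have irr: "\<not> lt x x" for x using asy by blast
  have dom: "\<exists>z\<in>A. z \<notin> S \<and> (\<forall>s\<in>S. lt s z)" if S: "countable S" "S \<subseteq> A" for S
  proof -
    have "countable ((\<Union>s\<in>S. {x. lt x s}) \<union> S)"
      using S unfolding A_def by (intro countable_Un countable_UN) auto
    then have "\<not> A \<subseteq> (\<Union>s\<in>S. {x. lt x s}) \<union> S"
      using Aunc A_def countable_subset by blast
    then obtain z where z: "z \<in> A" "z \<notin> (\<Union>s\<in>S. {x. lt x s}) \<union> S"
      by blast
    have "\<forall>s\<in>S. lt s z"
    proof
      fix s assume "s \<in> S"
      then have "z \<noteq> s" "\<not> lt z s" using z by auto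
      then show "lt s z" using tot by blast
    qed
    then show ?thesis using z by blast
  qed
  define ext where "ext Z1 Z2 \<longleftrightarrow> Z1 \<subseteq> Z2 \<and> (\<forall>x\<in>Z1. \<forall>y\<in>Z2. lt y x \<longrightarrow> y \<in> Z1)" for Z1 Z2 :: "real set"
  define F where "F = {Z. Z \<subseteq> A \<and> (\<forall>x\<in>Z. \<forall>y\<in>Z. \<forall>w\<in>Z. lt x y \<longrightarrow> lt y w \<longrightarrow> lt x w)
      \<and> (\<forall>T\<subseteq>Z. T \<noteq> {} \<longrightarrow> (\<exists>m\<in>T. \<forall>t\<in>T. \<not> lt t m))}"
  have po: "partial_order_on F (relation_of ext F)"
  proof (rule partial_order_on_relation_ofI)
    fix a b c :: "real set"
    show "ext a a" unfolding ext_def by blast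
    show "ext a b \<Longrightarrow> ext b c \<Longrightarrow> ext a c" unfolding ext_def by blast
    show "ext a b \<Longrightarrow> ext b a \<Longrightarrow> a = b" unfolding ext_def by blast
  qed
  have ch: "\<exists>u\<in>F. \<forall>a\<in>C. ext a u" if C: "C \<in> Chains (relation_of ext F)" for C
  proof -
    have CF: "C \<subseteq> F" and cmp: "\<And>a b. a \<in> C \<Longrightarrow> b \<in> C \<Longrightarrow> ext a b \<or> ext b a"
      using C unfolding Chains_def relation_of_def by auto
    let ?U = "\<Union>C"
    have sub: "\<And>a b. a \<in> C \<Longrightarrow> b \<in> C \<Longrightarrow> a \<subseteq> b \<or> b \<subseteq> a"
      using cmp ext_def by blast
    have "?U \<subseteq> A" using CF F_def by auto
    moreover have "\<forall>x\<in>?U. \<forall>y\<in>?U. \<forall>w\<in>?U. lt x y \<longrightarrow> lt y w \<longrightarrow> lt x w"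
    proof (intro ballI impI)
      fix x y w assume "x \<in> ?U" "y \<in> ?U" "w \<in> ?U" "lt x y" "lt y w"
      then obtain Zx Zy Zw where Z: "Zx \<in> C" "Zy \<in> C" "Zw \<in> C" "x \<in> Zx" "y \<in> Zy" "w \<in> Zw" by auto
      then obtain Z where "Z \<in> C" "x \<in> Z" "y \<in> Z" "w \<in> Z"
        using sub[of Zx Zy] sub[of Zx Zw] sub[of Zy Zw] by blast
      then show "lt x w" using CF F_def \<open>lt x y\<close> \<open>lt y w\<close> by blast
    qed
    moreover have "\<forall>T\<subseteq>?U. T \<noteq> {} \<longrightarrow> (\<exists>m\<in>T. \<forall>t\<in>T. \<not> lt t m)"
    proof (intro allI impI)
      fix T assume T: "T \<subseteq> ?U" "T \<noteq> {}"
      then obtain t0 Z where tZ: "t0 \<in> T" "Z \<in> C" "t0 \<in> Z" by blast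
      then have ZF: "Z \<in> F" using CF by auto
      have "T \<inter> Z \<subseteq> Z" "T \<inter> Z \<noteq> {}" using tZ by auto
      then obtain m where m: "m \<in> T \<inter> Z" "\<forall>t\<in>T \<inter> Z. \<not> lt t m"
        using ZF unfolding F_def by blast
      have "\<forall>t\<in>T. \<not> lt t m"
      proof (intro ballI notI)
        fix t assume "t \<in> T" "lt t m"
        then obtain Z' where "Z' \<in> C" "t \<in> Z'" using T by auto
        then have "t \<in> Z" using cmp[of Z Z'] tZ m \<open>lt t m\<close> unfolding ext_def by blast
        then show False using m \<open>t \<in> T\<close> \<open>lt t m\<close> by blast
      qed
      then show "\<exists>m\<in>T. \<forall>t\<in>T. \<not> lt t m" using m by blast
    qed
    ultimately have "?U \<in> F" unfolding F_def by blast
    moreover have "\<forall>a\<in>C. ext a ?U"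
      unfolding ext_def
    proof (intro ballI conjI)
      fix a x y assume a: "a \<in> C" and "x \<in> a" "y \<in> ?U"
      show "lt y x \<longrightarrow> y \<in> a"
      proof
        assume "lt y x"
        obtain Z' where "Z' \<in> C" "y \<in> Z'" using \<open>y \<in> ?U\<close> by auto
        then show "y \<in> a" using cmp[of a Z'] a \<open>x \<in> a\<close> \<open>lt y x\<close> unfolding ext_def by blast
      qed
    qed auto
    ultimately show ?thesis by blast
  qed
  obtain Z where ZF: "Z \<in> F" and Zmax: "\<And>a. a \<in> F \<Longrightarrow> ext Z a \<Longrightarrow> a = Z"
    using predicate_Zorn[OF po ch] by blast
  have ZA: "Z \<subseteq> A" and Ztr: "\<And>x y w. x \<in> Z \<Longrightarrow> y \<in> Z \<Longrightarrow> w \<in> Z \<Longrightarrow> lt x y \<Longrightarrow> lt y w \<Longrightarrow> lt x w"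
    and Zwf: "\<And>T. T \<subseteq> Z \<Longrightarrow> T \<noteq> {} \<Longrightarrow> \<exists>m\<in>T. \<forall>t\<in>T. \<not> lt t m"
    using ZF unfolding F_def by blast+
  have Zunc: "uncountable Z"
  proof
    assume "countable Z"
    then obtain z where z: "z \<in> A" "z \<notin> Z" "\<forall>s\<in>Z. lt s z" using dom ZA by blast
    let ?Z' = "insert z Z"
    have "?Z' \<subseteq> A" using z ZA by auto
    moreover have "\<forall>x\<in>?Z'. \<forall>y\<in>?Z'. \<forall>w\<in>?Z'. lt x y \<longrightarrow> lt y w \<longrightarrow> lt x w"
    proof (intro ballI impI)
      fix x y w assume xyw: "x \<in> ?Z'" "y \<in> ?Z'" "w \<in> ?Z'" "lt x y" "lt y w"
      have zlt: "\<not> lt z t" if "t \<in> Z" for t using z that asy by blast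
      show "lt x w"
      proof (cases "w = z")
        case True
        have "x \<noteq> z"
        proof
          assume "x = z"
          then have "y \<noteq> z" using xyw irr by blast
          then have "y \<in> Z" using xyw by blast
          then show False using zlt \<open>x = z\<close> xyw by blast
        qed
        then show ?thesis using True xyw z by blast
      next
        case False
        then have "w \<in> Z" using xyw by blast
        then have "y \<noteq> z" using zlt xyw by blast
        then have "y \<in> Z" using xyw by blast
        then have "x \<noteq> z" using zlt xyw by blast
        then have "x \<in> Z" using xyw by blast
        then show ?thesis using Ztr \<open>y \<in> Z\<close> \<open>w \<in> Z\<close> xyw by blast
      qed
    qed
    moreover have "\<forall>T\<subseteq>?Z'. T \<noteq> {} \<longrightarrow> (\<exists>m\<in>T. \<forall>t\<in>T. \<not> lt t m)"
    proof (intro allI impI)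
      fix T assume T: "T \<subseteq> ?Z'" "T \<noteq> {}"
      show "\<exists>m\<in>T. \<forall>t\<in>T. \<not> lt t m"
      proof (cases "T \<inter> Z = {}")
        case True
        then have "T = {z}" using T by auto
        then show ?thesis using irr by auto
      next
        case False
        then obtain m where m: "m \<in> T \<inter> Z" "\<forall>t\<in>T \<inter> Z. \<not> lt t m" using Zwf[of "T \<inter> Z"] by blast
        have "\<not> lt z m" using z m asy by blast
        then show ?thesis using m T by blast
      qed
    qed
    ultimately have "?Z' \<in> F" unfolding F_def by blast
    moreover have "ext Z ?Z'" unfolding ext_def using z asy by blast
    ultimately have "?Z' = Z" using Zmax by blast
    then show False using z by blast
  qed
  have up: "\<exists>y\<in>Z. lt x y" if x: "x \<in> Z" for x
  proof -
    have "countable (insert x {y. lt y x})" using x ZA A_def by auto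
    then have "\<not> Z \<subseteq> insert x {y. lt y x}" using Zunc countable_subset by blast
    then obtain y where y: "y \<in> Z" "y \<notin> insert x {y. lt y x}" by blast
    then have "y \<noteq> x" "\<not> lt y x" by auto
    then have "lt x y" using tot by blast
    then show ?thesis using y by blast
  qed
  define sc where "sc x = (SOME m. m \<in> Z \<and> lt x m \<and> (\<forall>t\<in>Z. lt x t \<longrightarrow> \<not> lt t m))" for x
  have sc: "sc x \<in> Z \<and> lt x (sc x) \<and> (\<forall>t\<in>Z. lt x t \<longrightarrow> \<not> lt t (sc x))" if x: "x \<in> Z" for x
  proof -
    have "{y\<in>Z. lt x y} \<subseteq> Z" "{y\<in>Z. lt x y} \<noteq> {}" using up[OF x] by auto
    then obtain m where "m \<in> {y\<in>Z. lt x y}" "\<forall>t\<in>{y\<in>Z. lt x y}. \<not> lt t m" using Zwf by blast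
    then have "\<exists>m. m \<in> Z \<and> lt x m \<and> (\<forall>t\<in>Z. lt x t \<longrightarrow> \<not> lt t m)" by blast
    then show ?thesis unfolding sc_def by (rule someI_ex)
  qed
  have scmin: "y = sc x \<or> lt (sc x) y" if "x \<in> Z" "y \<in> Z" "lt x y" for x y
  proof (rule ccontr)
    assume "\<not> (y = sc x \<or> lt (sc x) y)"
    then have "y \<noteq> sc x" "\<not> lt (sc x) y" by auto
    then have "lt y (sc x)" using tot by blast
    then show False using sc[OF that(1)] that by blast
  qed
  define W where "W x = {y. lt x y} \<inter> {y. lt y (sc (sc x))}" for x
  have OW: "Op (W x)" for x unfolding W_def using OInt Oin Oout by blast
  have scW: "sc x \<in> W x" if "x \<in> Z" for x unfolding W_def using sc[OF that] sc[of "sc x"] that by blast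
  have ZW: "y = sc x" if "x \<in> Z" "y \<in> Z" "y \<in> W x" for x y
  proof (rule ccontr)
    assume ne: "y \<noteq> sc x"
    have s1: "sc x \<in> Z" using sc that(1) by blast
    have "lt x y" "lt y (sc (sc x))" using that(3) W_def by auto
    then have "lt (sc x) y" using scmin that ne by blast
    then have "y = sc (sc x) \<or> lt (sc (sc x)) y" using scmin[OF s1 that(2)] by blast
    then show False using \<open>lt y (sc (sc x))\<close> irr asy by blast
  qed
  have inj: "inj_on sc Z"
  proof (rule inj_onI)
    fix x x' assume xx: "x \<in> Z" "x' \<in> Z" "sc x = sc x'"
    show "x = x'"
    proof (rule ccontr)
      assume "x \<noteq> x'"
      then have "lt x x' \<or> lt x' x" using tot by blast
      then show False
      proof
        assume "lt x x'"
        then have "x' = sc x \<or> lt (sc x) x'" using scmin xx by blast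
        moreover have "lt x' (sc x)" using sc[OF xx(2)] xx(3) by simp
        ultimately show False using irr asy by blast
      next
        assume "lt x' x"
        then have "x = sc x' \<or> lt (sc x') x" using scmin xx by blast
        moreover have "lt x (sc x')" using sc[OF xx(1)] xx(3) by simp
        ultimately show False using irr asy by blast
      qed
    qed
  qed
  have Punc: "uncountable (sc ` Z)" using inj Zunc countable_image_inj_on by blast
  obtain P1 P2 where P: "P1 \<subseteq> sc ` Z" "P2 \<subseteq> sc ` Z" "P1 \<inter> P2 = {}" "uncountable P1" "uncountable P2"
    using split_uncountable[OF Punc] by blast
  define G where "G = \<Union>{W x | x. x \<in> Z \<and> sc x \<in> P1}"
  have OG: "Op G" unfolding G_def by (rule OUn) (use OW in blast)
  have "P1 \<subseteq> G"
  proof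
    fix p assume "p \<in> P1"
    then obtain x where "x \<in> Z" "p = sc x" using P(1) by blast
    then have "p \<in> W x" "x \<in> Z \<and> sc x \<in> P1" using scW \<open>p \<in> P1\<close> by auto
    then show "p \<in> G" unfolding G_def by blast
  qed
  moreover have "P2 \<subseteq> - G"
  proof
    fix q assume q: "q \<in> P2"
    then obtain x' where x': "x' \<in> Z" "q = sc x'" using P(2) by blast
    then have qZ: "q \<in> Z" using sc by blast
    show "q \<in> - G"
    proof
      assume "q \<in> G"
      then obtain x where "x \<in> Z" "sc x \<in> P1" "q \<in> W x" unfolding G_def by blast
      then have "q = sc x" using ZW qZ by blast
      then show False using q P(3) \<open>sc x \<in> P1\<close> by blast
    qed
  qed
  ultimately have "uncountable G" "uncountable (- G)" using P(4,5) countable_subset by blast+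
  then show False using cc[OF OG] by blast
qed

theorem theorem3p8:
  fixes f :: "real set \<Rightarrow> real"
  assumes "two_point_selection f"
  shows "countable_cocountable \<noteq> sel_borel f"
proof
  assume eq: "countable_cocountable = sel_borel f"
  define lt where "lt = sel_less f"
  define Op where "Op U = openin (sel_topology f) U" for U
  have tot: "lt x y \<or> lt y x" if "x \<noteq> y" for x y
  proof -
    have "f {x, y} \<in> {x, y}" using assms that unfolding two_point_selection_def by blast
    moreover have "{y, x} = {x, y}" by blast
    ultimately show ?thesis using that unfolding lt_def sel_less_def by auto
  qed
  have asy: "\<not> lt y x" if "lt x y" for x y
  proof
    assume "lt y x"
    moreover have "{y, x} = {x, y}" by blast
    ultimately show False using that unfolding lt_def sel_less_def by auto
  qed
  have Oin: "Op {x. lt x r}" for r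
    unfolding Op_def sel_topology_def lt_def
    by (rule topology_generated_by_Basis) (auto simp: sel_subbase_def)
  have Oout: "Op {x. lt r x}" for r
    unfolding Op_def sel_topology_def lt_def
    by (rule topology_generated_by_Basis) (auto simp: sel_subbase_def)
  have OInt: "Op (U \<inter> V)" if "Op U" "Op V" for U V
    using that unfolding Op_def by (rule openin_Int)
  have OUn: "Op (\<Union>\<U>)" if "\<forall>U\<in>\<U>. Op U" for \<U>
    using that unfolding Op_def by (intro openin_Union) blast
  have cc: "countable U \<or> countable (- U)" if "Op U" for U
  proof -
    have "U \<in> sel_borel f" using that unfolding Op_def sel_borel_def
      by (auto intro: sigma_sets.Basic)
    then have "U \<in> countable_cocountable" using eq by simp
    then show ?thesis unfolding countable_cocountable_def by (simp add: Compl_eq_Diff_UNIV)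
  qed
  show False
  proof (cases "countable {r. countable {x. lt x r}}")
    case False
    show False by (rule lemma_M[OF tot asy Oin Oout OInt OUn cc False])
  next
    case True
    let ?B = "- {r. countable {x. lt x r}}"
    have "uncountable ?B"
    proof
      assume "countable ?B"
      then have "countable ({r. countable {x. lt x r}} \<union> ?B)" using True by (rule countable_Un[rotated])
      moreover have "{r. countable {x. lt x r}} \<union> ?B = UNIV" by blast
      ultimately have "countable (UNIV :: real set)" by simp
      then show False using uncountable_UNIV_real by simp
    qed
    moreover have "?B \<subseteq> {r. countable {x. lt r x}}"
    proof
      fix r assume "r \<in> ?B"
      then have "uncountable {x. lt x r}" by simp
      then have "countable (- {x. lt x r})" using cc[OF Oin] by blast
      moreover have "{x. lt r x} \<subseteq> - {x. lt x r}" using asy by blast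
      ultimately show "r \<in> {r. countable {x. lt r x}}" using countable_subset by blast
    qed
    ultimately have unc: "uncountable {r. countable {x. lt r x}}" using countable_subset by blast
    have tot': "lt y x \<or> lt x y" if "x \<noteq> y" for x y using tot that by blast
    have asy': "\<not> lt x y" if "lt y x" for x y using asy that by blast
    show False
      by (rule lemma_M[where lt="\<lambda>x y. lt y x" and Op=Op, OF tot' asy' Oout Oin OInt OUn cc unc])
  qed
qed

end
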